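(* No axis rule (defined for profiles over every finite candidate set) satisfies both heredity and consistency with linearity.
   Context: Candidates come from a fixed infinite universe. An approval ballot is a nonempty subset $A\subseteq C$; a profile over $C$ is a finite sequence of ballots. An axis is a strict linear order $\triangleleft$ on $C$. A ballot $A$ is an interval of $\triangleleft$ if for all $a,b\in A$ and every $c$ with $a\triangleleft c\triangleleft b$ we have $c\in A$. A profile is linear if some axis makes all its ballots intervals; $\mathrm{con}(P)$ is the set of such axes. An axis rule maps each profile $P$ over $C$ to a nonempty set $f(P)$ of axes on $C$ closed under reversal. It is consistent with linearity if $f(P)=\mathrm{con}(P)$ for every linear profile $P$. For $C'\subseteq C$, $P_{C'}$ is the profile over $C'$ obtained by intersecting each ballot with $C'$ (ballots becoming empty are discarded), and $\triangleleft_{C'}$ is the restriction of $\triangleleft$ to $C'$. $f$ satisfies heredity if for every profile $P$ over $C$, every $C'\subseteq C$ and every $\triangleleft\in f(P)$, we have $\triangleleft_{C'}\in f(P_{C'})$. *)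

theory Defs
  imports Main
begin

definition ballot_over :: "'c set \<Rightarrow> 'c set \<Rightarrow> bool" where
  "ballot_over C A \<longleftrightarrow> A \<noteq> {} \<and> A \<subseteq> C"

definition profile_over :: "'c set \<Rightarrow> 'c set list \<Rightarrow> bool" where
  "profile_over C P \<longleftrightarrow> (\<forall>A\<in>set P. ballot_over C A)"

definition axis :: "'c set \<Rightarrow> ('c \<times> 'c) set \<Rightarrow> bool" where
  "axis C r \<longleftrightarrow> strict_linear_order_on C r \<and> r \<subseteq> C \<times> C"

definition is_interval :: "('c \<times> 'c) set \<Rightarrow> 'c set \<Rightarrow> bool" where
  "is_interval r A \<longleftrightarrow> (\<forall>a\<in>A. \<forall>b\<in>A. \<forall>c. (a, c) \<in> r \<and> (c, b) \<in> r \<longrightarrow> c \<in> A)"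

definition con :: "'c set \<Rightarrow> 'c set list \<Rightarrow> ('c \<times> 'c) set set" where
  "con C P = {r. axis C r \<and> (\<forall>A\<in>set P. is_interval r A)}"

definition linear_profile :: "'c set \<Rightarrow> 'c set list \<Rightarrow> bool" where
  "linear_profile C P \<longleftrightarrow> con C P \<noteq> {}"

definition axis_rule :: "('c set \<Rightarrow> 'c set list \<Rightarrow> ('c \<times> 'c) set set) \<Rightarrow> bool" where
  "axis_rule f \<longleftrightarrow> (\<forall>C P. finite C \<and> profile_over C P \<longrightarrow>
      f C P \<noteq> {} \<and> (\<forall>r\<in>f C P. axis C r \<and> r\<inverse> \<in> f C P))"

definition consistent_with_linearity :: "('c set \<Rightarrow> 'c set list \<Rightarrow> ('c \<times> 'c) set set) \<Rightarrow> bool" where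
  "consistent_with_linearity f \<longleftrightarrow> (\<forall>C P. finite C \<and> profile_over C P \<and> linear_profile C P
      \<longrightarrow> f C P = con C P)"

definition restrict_profile :: "'c set \<Rightarrow> 'c set list \<Rightarrow> 'c set list" where
  "restrict_profile C' P = filter (\<lambda>A. A \<noteq> {}) (map (\<lambda>A. A \<inter> C') P)"

definition restrict_axis :: "'c set \<Rightarrow> ('c \<times> 'c) set \<Rightarrow> ('c \<times> 'c) set" where
  "restrict_axis C' r = r \<inter> (C' \<times> C')"

definition heredity :: "('c set \<Rightarrow> 'c set list \<Rightarrow> ('c \<times> 'c) set set) \<Rightarrow> bool" where
  "heredity f \<longleftrightarrow> (\<forall>C P C' r. finite C \<and> profile_over C P \<and> C' \<subseteq> C \<and> r \<in> f C P
      \<longrightarrow> restrict_axis C' r \<in> f C' (restrict_profile C' P))"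

end

theory Submission
  imports Defs
begin

lemma set_restr: "set (restrict_profile C' P) = (\<lambda>A. A \<inter> C') ` set P - {{}}"
  by (auto simp: restrict_profile_def)

lemma ne_by_mem: "a \<in> S \<Longrightarrow> S \<noteq> {}" by auto

lemma tri:
  fixes f :: "'c set \<Rightarrow> 'c set list \<Rightarrow> ('c \<times> 'c) set set"
  assumes d: "distinct [x,y,z,w]"
    and h: "heredity f" and c: "consistent_with_linearity f"
    and r: "r \<in> f {x,y,z,w} P" and P: "set P = {{x,y},{y,z},{z,w},{w,x}}"
  shows "\<not>((x,z)\<in>r \<and> (z,y)\<in>r) \<and> \<not>((y,z)\<in>r \<and> (z,x)\<in>r) \<and>
         \<not>((y,x)\<in>r \<and> (x,z)\<in>r) \<and> \<not>((z,x)\<in>r \<and> (x,y)\<in>r)"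
proof -
  let ?C' = "{x,y,z}"
  let ?P' = "restrict_profile ?C' P"
  have sP': "set ?P' = {{x,y},{y,z},{z},{x}}"
    using d unfolding set_restr P by auto
  have po: "profile_over {x,y,z,w} P" using P by (auto simp: profile_over_def ballot_over_def)
  have po': "profile_over ?C' ?P'" using sP' by (auto simp: profile_over_def ballot_over_def)
  have s: "restrict_axis ?C' r \<in> f ?C' ?P'"
    by (rule h[unfolded heredity_def, rule_format, of "{x,y,z,w}"]) (use po r in auto)
  define q where "q = {(x,y),(y,z),(x,z)}"
  have ax: "axis ?C' q" using d
    unfolding axis_def q_def strict_linear_order_on_def trans_def irrefl_def total_on_def
    by auto
  have "q \<in> con ?C' ?P'" using ax d unfolding con_def sP' is_interval_def q_def by auto
  hence lin: "linear_profile ?C' ?P'" unfolding linear_profile_def by (rule ne_by_mem)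
  have "f ?C' ?P' = con ?C' ?P'" by (rule c[unfolded consistent_with_linearity_def, rule_format]) (use po' lin in auto)
  with s have "restrict_axis ?C' r \<in> con ?C' ?P'" by simp
  hence i1: "is_interval (restrict_axis ?C' r) {x,y}" and i2: "is_interval (restrict_axis ?C' r) {y,z}"
    unfolding con_def sP' by auto
  show ?thesis
  proof (intro conjI notI)
    assume "(x,z)\<in>r \<and> (z,y)\<in>r" thus False using i1 d
      unfolding is_interval_def restrict_axis_def by (auto dest!: bspec[of _ _ x] bspec[of _ _ y])
  next
    assume "(y,z)\<in>r \<and> (z,x)\<in>r" thus False using i1 d
      unfolding is_interval_def restrict_axis_def by (auto dest!: bspec[of _ _ y] bspec[of _ _ x])
  next
    assume "(y,x)\<in>r \<and> (x,z)\<in>r" thus False using i2 d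
      unfolding is_interval_def restrict_axis_def by (auto dest!: bspec[of _ _ y] bspec[of _ _ z])
  next
    assume "(z,x)\<in>r \<and> (x,y)\<in>r" thus False using i2 d
      unfolding is_interval_def restrict_axis_def by (auto dest!: bspec[of _ _ z] bspec[of _ _ y])
  qed
qed

lemma L: fixes r :: "('c*'c) set" and x y z w :: 'c assumes "(x,y)\<in>r \<or> (y,x)\<in>r" and "(x,z)\<in>r \<or> (z,x)\<in>r" and "(x,w)\<in>r \<or> (w,x)\<in>r" and "(y,z)\<in>r \<or> (z,y)\<in>r" and "(y,w)\<in>r \<or> (w,y)\<in>r" and "(z,w)\<in>r \<or> (w,z)\<in>r" and "(x,y)\<in>r \<longrightarrow> (y,x)\<notin>r" and "(x,z)\<in>r \<longrightarrow> (z,x)\<notin>r" and "(x,w)\<in>r \<longrightarrow> (w,x)\<notin>r" and "(y,z)\<in>r \<longrightarrow> (z,y)\<notin>r" and "(y,w)\<in>r \<longrightarrow> (w,y)\<notin>r" and "(z,w)\<in>r \<longrightarrow> (w,z)\<notin>r" and "(x,y)\<in>r \<and> (y,z)\<in>r \<longrightarrow> (x,z)\<in>r" and "(x,y)\<in>r \<and> (y,w)\<in>r \<longrightarrow> (x,w)\<in>r" and "(x,z)\<in>r \<and> (z,y)\<in>r \<longrightarrow> (x,y)\<in>r" and "(x,z)\<in>r \<and> (z,w)\<in>r \<longrightarrow> (x,w)\<in>r" and "(x,w)\<in>r \<and> (w,y)\<in>r \<longrightarrow> (x,y)\<in>r" and "(x,w)\<in>r \<and> (w,z)\<in>r \<longrightarrow>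 (x,z)\<in>r" and "(y,x)\<in>r \<and> (x,z)\<in>r \<longrightarrow> (y,z)\<in>r" and "(y,x)\<in>r \<and> (x,w)\<in>r \<longrightarrow> (y,w)\<in>r" and "(y,z)\<in>r \<and> (z,x)\<in>r \<longrightarrow> (y,x)\<in>r" and "(y,z)\<in>r \<and> (z,w)\<in>r \<longrightarrow> (y,w)\<in>r" and "(y,w)\<in>r \<and> (w,x)\<in>r \<longrightarrow> (y,x)\<in>r" and "(y,w)\<in>r \<and> (w,z)\<in>r \<longrightarrow> (y,z)\<in>r" and "(z,x)\<in>r \<and> (x,y)\<in>r \<longrightarrow> (z,y)\<in>r" and "(z,x)\<in>r \<and> (x,w)\<in>r \<longrightarrow> (z,w)\<in>r" and "(z,y)\<in>r \<and> (y,x)\<in>r \<longrightarrow> (z,x)\<in>r" and "(z,y)\<in>r \<and> (y,w)\<in>r \<longrightarrow> (z,w)\<in>r" and "(z,w)\<in>r \<and> (w,x)\<in>r \<longrightarrow> (z,x)\<in>r" and "(z,w)\<in>r \<and> (w,y)\<in>r \<longrightarrow> (z,y)\<in>r" and "(w,x)\<in>r \<and> (x,y)\<in>r \<longrightarrow> (w,y)\<in>r" and "(w,x)\<in>r \<and> (x,z)\<in>r \<longrightarrow> (w,z)\<in>r" and "(w,y)\<in>r \<and> (y,x)\<in>r \<longrightarrow> (w,x)\<in>r" and "(w,y)\<in>r \<and> (y,z)\<in>r \<longrightarrow> (w,z)\<in>r" and "(w,z)\<in>r \<and> (z,x)\<in>r \<longrightarrow> (w,x)\<in>r" and "(w,z)\<in>r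 \<and> (z,y)\<in>r \<longrightarrow> (w,y)\<in>r" and "\<not>((x,z)\<in>r \<and> (z,y)\<in>r) \<and> \<not>((y,z)\<in>r \<and> (z,x)\<in>r) \<and> \<not>((y,x)\<in>r \<and> (x,z)\<in>r) \<and> \<not>((z,x)\<in>r \<and> (x,y)\<in>r)" and "\<not>((y,w)\<in>r \<and> (w,z)\<in>r) \<and> \<not>((z,w)\<in>r \<and> (w,y)\<in>r) \<and> \<not>((z,y)\<in>r \<and> (y,w)\<in>r) \<and> \<not>((w,y)\<in>r \<and> (y,z)\<in>r)" and "\<not>((z,x)\<in>r \<and> (x,w)\<in>r) \<and> \<not>((w,x)\<in>r \<and> (x,z)\<in>r) \<and> \<not>((w,z)\<in>r \<and> (z,x)\<in>r) \<and> \<not>((x,z)\<in>r \<and> (z,w)\<in>r)" and "\<not>((w,y)\<in>r \<and> (y,x)\<in>r) \<and> \<not>((x,y)\<in>r \<and> (y,w)\<in>r) \<and> \<not>((x,w)\<in>r \<and> (w,y)\<in>r) \<and> \<not>((y,w)\<in>r \<and> (w,x)\<in>r)" shows False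
  using assms by (smt (verit))

theorem mainTheorem18:
  fixes f :: "'c set \<Rightarrow> 'c set list \<Rightarrow> ('c \<times> 'c) set set"
  assumes "infinite (UNIV :: 'c set)"
    and "axis_rule f"
  shows "\<not> (heredity f \<and> consistent_with_linearity f)"
proof
  assume hc: "heredity f \<and> consistent_with_linearity f"
  obtain S :: "'c set" where S: "finite S" "card S = 4"
    using assms(1) infinite_arbitrarily_large by blast
  then obtain x y z w where d: "distinct [x,y,z,w]" and Sd: "S = {x,y,z,w}"
    by (auto simp: card_Suc_eq numeral_eq_Suc)
  define P where "P = [{x,y},{y,z},{z,w},{w,x}]"
  have po: "profile_over {x,y,z,w} P" by (auto simp: P_def profile_over_def ballot_over_def)
  then obtain r where r: "r \<in> f {x,y,z,w} P" and ax: "axis {x,y,z,w} r"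
    using assms(2) unfolding axis_rule_def by fastforce
  have dd: "distinct [y,z,w,x]" "distinct [z,w,x,y]" "distinct [w,x,y,z]" using d by auto
  have e: "{y,z,w,x} = {x,y,z,w}" "{z,w,x,y} = {x,y,z,w}" "{w,x,y,z} = {x,y,z,w}" by auto
  have h: "heredity f" and c: "consistent_with_linearity f" using hc by auto
  have s1: "set P = {{x,y},{y,z},{z,w},{w,x}}" by (simp add: P_def)
  have s2: "set P = {{y,z},{z,w},{w,x},{x,y}}" by (auto simp add: P_def)
  have s3: "set P = {{z,w},{w,x},{x,y},{y,z}}" by (auto simp add: P_def)
  have s4: "set P = {{w,x},{x,y},{y,z},{z,w}}" by (auto simp add: P_def)
  have r2: "r \<in> f {y,z,w,x} P" using r e(1) by simp
  have r3: "r \<in> f {z,w,x,y} P" using r e(2) by simp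
  have r4: "r \<in> f {w,x,y,z} P" using r e(3) by simp
  have t1: "\<not>((x,z)\<in>r \<and> (z,y)\<in>r) \<and> \<not>((y,z)\<in>r \<and> (z,x)\<in>r) \<and>
         \<not>((y,x)\<in>r \<and> (x,z)\<in>r) \<and> \<not>((z,x)\<in>r \<and> (x,y)\<in>r)"
    by (rule tri[OF d h c r s1])
  have t2: "\<not>((y,w)\<in>r \<and> (w,z)\<in>r) \<and> \<not>((z,w)\<in>r \<and> (w,y)\<in>r) \<and>
         \<not>((z,y)\<in>r \<and> (y,w)\<in>r) \<and> \<not>((w,y)\<in>r \<and> (y,z)\<in>r)"
    by (rule tri[OF dd(1) h c r2 s2])
  have t3: "\<not>((z,x)\<in>r \<and> (x,w)\<in>r) \<and> \<not>((w,x)\<in>r \<and> (x,z)\<in>r) \<and>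
         \<not>((w,z)\<in>r \<and> (z,x)\<in>r) \<and> \<not>((x,z)\<in>r \<and> (z,w)\<in>r)"
    by (rule tri[OF dd(2) h c r3 s3])
  have t4: "\<not>((w,y)\<in>r \<and> (y,x)\<in>r) \<and> \<not>((x,y)\<in>r \<and> (y,w)\<in>r) \<and>
         \<not>((x,w)\<in>r \<and> (w,y)\<in>r) \<and> \<not>((y,w)\<in>r \<and> (w,x)\<in>r)"
    by (rule tri[OF dd(3) h c r4 s4])
  have tr: "trans r" and tot: "total_on {x,y,z,w} r" and irr: "irrefl r"
    using ax unfolding axis_def strict_linear_order_on_def by auto
  have T: "\<And>a b. a \<in> {x,y,z,w} \<Longrightarrow> b \<in> {x,y,z,w} \<Longrightarrow> a \<noteq> b \<Longrightarrow> (a,b) \<in> r \<or> (b,a) \<in> r"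
    using tot unfolding total_on_def by blast
  have Tr: "\<And>a b c. (a,b) \<in> r \<Longrightarrow> (b,c) \<in> r \<Longrightarrow> (a,c) \<in> r" using tr unfolding trans_def by blast
  have A: "\<And>a b. (a,b) \<in> r \<Longrightarrow> (b,a) \<notin> r" using Tr irr unfolding irrefl_def by blast
  have dd2: "x \<noteq> y" "x \<noteq> z" "x \<noteq> w" "y \<noteq> z" "y \<noteq> w" "z \<noteq> w" using d by auto
  have tot: "(x,y)\<in>r \<or> (y,x)\<in>r" "(x,z)\<in>r \<or> (z,x)\<in>r" "(x,w)\<in>r \<or> (w,x)\<in>r" "(y,z)\<in>r \<or> (z,y)\<in>r" "(y,w)\<in>r \<or> (w,y)\<in>r" "(z,w)\<in>r \<or> (w,z)\<in>r" using dd2 T by auto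
  have asy: "(x,y)\<in>r \<longrightarrow> (y,x)\<notin>r" "(x,z)\<in>r \<longrightarrow> (z,x)\<notin>r" "(x,w)\<in>r \<longrightarrow> (w,x)\<notin>r" "(y,z)\<in>r \<longrightarrow> (z,y)\<notin>r" "(y,w)\<in>r \<longrightarrow> (w,y)\<notin>r" "(z,w)\<in>r \<longrightarrow> (w,z)\<notin>r" using A by blast+
  have trs: "(x,y)\<in>r \<and> (y,z)\<in>r \<longrightarrow> (x,z)\<in>r" "(x,y)\<in>r \<and> (y,w)\<in>r \<longrightarrow> (x,w)\<in>r" "(x,z)\<in>r \<and> (z,y)\<in>r \<longrightarrow> (x,y)\<in>r" "(x,z)\<in>r \<and> (z,w)\<in>r \<longrightarrow> (x,w)\<in>r" "(x,w)\<in>r \<and> (w,y)\<in>r \<longrightarrow> (x,y)\<in>r" "(x,w)\<in>r \<and> (w,z)\<in>r \<longrightarrow> (x,z)\<in>r" "(y,x)\<in>r \<and> (x,z)\<in>r \<longrightarrow> (y,z)\<in>r" "(y,x)\<in>r \<and> (x,w)\<in>r \<longrightarrow> (y,w)\<in>r" "(y,z)\<in>r \<and> (z,x)\<in>r \<longrightarrow> (y,x)\<in>r" "(y,z)\<in>r \<and> (z,w)\<in>r \<longrightarrow> (y,w)\<in>r" "(y,w)\<in>r \<and> (w,x)\<in>r \<longrightarrow> (y,x)\<in>r" "(y,w)\<in>r \<and> (w,z)\<in>r \<longrightarrow> (y,z)\<in>r" "(z,x)\<in>r \<and> (x,y)\<in>r \<longrightarrow> (z,y)\<in>r" "(z,x)\<in>r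 \<and> (x,w)\<in>r \<longrightarrow> (z,w)\<in>r" "(z,y)\<in>r \<and> (y,x)\<in>r \<longrightarrow> (z,x)\<in>r" "(z,y)\<in>r \<and> (y,w)\<in>r \<longrightarrow> (z,w)\<in>r" "(z,w)\<in>r \<and> (w,x)\<in>r \<longrightarrow> (z,x)\<in>r" "(z,w)\<in>r \<and> (w,y)\<in>r \<longrightarrow> (z,y)\<in>r" "(w,x)\<in>r \<and> (x,y)\<in>r \<longrightarrow> (w,y)\<in>r" "(w,x)\<in>r \<and> (x,z)\<in>r \<longrightarrow> (w,z)\<in>r" "(w,y)\<in>r \<and> (y,x)\<in>r \<longrightarrow> (w,x)\<in>r" "(w,y)\<in>r \<and> (y,z)\<in>r \<longrightarrow> (w,z)\<in>r" "(w,z)\<in>r \<and> (z,x)\<in>r \<longrightarrow> (w,x)\<in>r" "(w,z)\<in>r \<and> (z,y)\<in>r \<longrightarrow> (w,y)\<in>r" using Tr by blast+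
  show False using L[OF tot asy trs t1 t2 t3 t4] .
qed

end
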